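(* $\lim_{j\to\infty}p_j^*=\lim_{j\to\infty}u_j^*=1$ and $\lim_{j\to\infty}\lambda_j^*=0$, where $\lambda_j^*=1-u_j^*$.
   Context: $\Phi$ is the partial map of $\mathbb{R}^2$ defined for $p\ne0$ by $\Phi(p,u)=\bigl(p^2(u+1)-1,\ 1/p\bigr)$. For $n\ge1$, the trajectory $T_n$ is the (existing and unique) finite sequence $(p_{j,n},u_{j,n})$, $j=0,\dots,n$, with $(p_{j,n},u_{j,n})=\Phi(p_{j-1,n},u_{j-1,n})$ for $1\le j\le n$, $u_{0,n}=0$, $p_{n,n}=0$, and $p_{j,n}>0$ for $0\le j\le n-1$. For each $j\ge0$ the limit $p_j^*=\lim_{n\to\infty}p_{j,n}$ exists, and $u_j^*=\lim_{n\to\infty}u_{j,n}=1/p_{j-1}^*$ for $j\ge1$. *)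

theory Defs
  imports Complex_Main
begin

text \<open>The partial map Phi(p,u) = (p^2 (u+1) - 1, 1/p), meaningful for p \<noteq> 0.\<close>
definition Phi :: "real \<times> real \<Rightarrow> real \<times> real" where
  "Phi pu = (fst pu ^ 2 * (snd pu + 1) - 1, 1 / fst pu)"

definition is_traj :: "nat \<Rightarrow> (nat \<Rightarrow> real) \<Rightarrow> (nat \<Rightarrow> real) \<Rightarrow> bool" where
  "is_traj n P U \<longleftrightarrow>
     U 0 = 0 \<and> P n = 0 \<and> (\<forall>j<n. P j > 0) \<and>
     (\<forall>j\<in>{1..n}. (P j, U j) = Phi (P (j - 1), U (j - 1)))"

end

theory Submission
  imports Defs
begin

lemma traj_step:
  assumes "is_traj n P U" "1 \<le> j" "j \<le> n"
  shows "P j = (P (j-1))^2 * (U (j-1) + 1) - 1" "U j = 1 / P (j-1)"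
  using assms unfolding is_traj_def Phi_def by auto

lemma traj_grow:
  assumes tr: "is_traj n P U" and j: "1 \<le> j" "j \<le> n" and h1: "P j \<ge> 1" and h2: "P j \<ge> P (j-1)"
  shows False
proof -
  have pos: "\<And>i. i < n \<Longrightarrow> P i > 0" using tr unfolding is_traj_def by auto
  have "\<forall>k. j + k \<le> n \<longrightarrow> P (j+k) \<ge> 1 \<and> P (j+k) \<ge> P (j+k-1)"
  proof
    fix k show "j + k \<le> n \<longrightarrow> P (j+k) \<ge> 1 \<and> P (j+k) \<ge> P (j+k-1)"
    proof (induction k)
      case 0 then show ?case using h1 h2 by simp
    next
      case (Suc k)
      show ?case
      proof
        assume le: "j + Suc k \<le> n"
        define a where "a = P (j+k-1)"
        define b where "b = P (j+k)"
        have ih: "b \<ge> 1" "b \<ge> a" using Suc le unfolding a_def b_def by auto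
        have apos: "a > 0" unfolding a_def using pos le by auto
        have e1: "P (j + Suc k) = b^2 * (U (j+k) + 1) - 1"
          using traj_step(1)[OF tr, of "j + Suc k"] le unfolding b_def by simp
        have e2: "U (j+k) = 1 / a"
          using traj_step(2)[OF tr, of "j + k"] le j unfolding a_def by simp
        have "1/a \<ge> 1/b" using apos ih by (simp add: frac_le)
        then have "b^2 * (1/a + 1) \<ge> b^2 * (1/b + 1)" by (simp add: mult_left_mono)
        also have "b^2 * (1/b+1) = b * (b+1)" using ih by (simp add: power2_eq_square field_simps)
        finally have "b^2 * (1/a+1) \<ge> b*(b+1)" .
        moreover have "b*(b+1) \<ge> b + 1" using mult_right_mono[OF ih(1), of "b+1"] ih by simp
        ultimately have "P (j + Suc k) \<ge> b" using e1 e2 by simp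
        then show "P (j + Suc k) \<ge> 1 \<and> P (j + Suc k) \<ge> P (j + Suc k - 1)"
          using ih unfolding b_def by simp
      qed
    qed
  qed
  then have "j + (n - j) \<le> n \<longrightarrow> P (j + (n - j)) \<ge> 1 \<and> P (j + (n - j)) \<ge> P (j + (n - j) - 1)" by (rule spec)
  then have "P n \<ge> 1" using j by simp
  moreover have "P n = 0" using tr unfolding is_traj_def by auto
  ultimately show False by simp
qed

lemma G_lemma:
  fixes P U :: "nat \<Rightarrow> real"
  assumes R: "\<And>m. P (Suc m) = (P m)^2 * (U m + 1) - 1"
    and Ru: "\<And>m. U (Suc m) = 1 / P m"
    and pos: "\<And>m. P m > 0"
    and c1: "P (Suc m) < 1" and c2: "P (Suc m) \<le> P m"
  shows False
proof -
  define c where "c = P (Suc m)"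
  have key: "\<And>k. P (Suc m + k) \<le> c - real k * (1 - c) \<and> P (Suc m + k) \<le> P (m + k)"
  proof -
    fix k show "P (Suc m + k) \<le> c - real k * (1 - c) \<and> P (Suc m + k) \<le> P (m + k)"
    proof (induction k)
      case 0 then show ?case using c2 c_def by simp
    next
      case (Suc k)
      define a where "a = P (m+k)"
      define b where "b = P (Suc m + k)"
      have ih: "b \<le> c - real k * (1 - c)" "b \<le> a" using Suc unfolding a_def b_def by auto
      have bpos: "b > 0" using pos b_def by simp
      have c0: "c < 1" using c1 c_def by simp
      have bc: "b \<le> c" 
      proof -
        have "real k * (1 - c) \<ge> 0" using c0 by simp
        then show ?thesis using ih by linarith
      qed
      have e1: "P (Suc m + Suc k) = b^2 * (1/a + 1) - 1"
        using R[of "Suc m + k"] Ru[of "m+k"] unfolding a_def b_def by simp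
      have "1/a \<le> 1/b" using bpos ih by (simp add: frac_le)
      then have "b^2 * (1/a + 1) \<le> b^2 * (1/b + 1)" by (simp add: mult_left_mono)
      also have "b^2 * (1/b+1) = b * (b+1)" using bpos by (simp add: power2_eq_square field_simps)
      finally have le1: "P (Suc m + Suc k) \<le> b * b + b - 1" using e1 by (simp add: algebra_simps)
      have "b * b \<le> c * b" using bc bpos by (simp add: mult_right_mono)
      moreover have "c * b \<le> c" using mult_left_mono[of b 1 c] bc c0 pos[of "Suc m"] c_def by simp
      ultimately have le2: "P (Suc m + Suc k) \<le> b - (1 - c)" using le1 by linarith
      have "P (Suc m + Suc k) \<le> c - real (Suc k) * (1 - c)" using le2 ih by (simp add: algebra_simps)
      moreover have "P (Suc m + Suc k) \<le> P (m + Suc k)" using le2 c0 b_def by simp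
      ultimately show ?case by simp
    qed
  qed
  have c0: "c < 1" using c1 c_def by simp
  obtain k :: nat where k: "real k > c / (1 - c)" using reals_Archimedean2 by blast
  have "real k * (1 - c) > c" using k c0 by (simp add: field_simps)
  then have "P (Suc m + k) < 0" using key[of k] by linarith
  then show False using pos[of "Suc m + k"] by simp
qed

theorem mainTheorem11:
  fixes p u :: "nat \<Rightarrow> nat \<Rightarrow> real" and pstar ustar :: "nat \<Rightarrow> real"
  assumes traj: "\<forall>n\<ge>1. is_traj n (\<lambda>j. p j n) (\<lambda>j. u j n)"
    and plim: "\<forall>j. (\<lambda>n. p j n) \<longlonglongrightarrow> pstar j"
    and ulim: "\<forall>j. (\<lambda>n. u j n) \<longlonglongrightarrow> ustar j"
  shows "pstar \<longlonglongrightarrow> 1 \<and> ustar \<longlonglongrightarrow> 1 \<and> (\<lambda>j. 1 - ustar j) \<longlonglongrightarrow> 0"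
proof -
  define P where "P = pstar"
  define U where "U = ustar"
  have ev: "\<And>m. eventually (\<lambda>n. Suc m \<le> n) sequentially"
    by (simp add: eventually_ge_at_top)
  have stepR: "\<And>m n. Suc m \<le> n \<Longrightarrow> p (Suc m) n = (p m n)^2 * (u m n + 1) - 1"
  proof -
    fix m n assume h: "Suc m \<le> n"
    have tr: "is_traj n (\<lambda>j. p j n) (\<lambda>j. u j n)" using traj h by simp
    show "p (Suc m) n = (p m n)^2 * (u m n + 1) - 1" using traj_step(1)[OF tr, of "Suc m"] h by simp
  qed
  have stepU: "\<And>m n. Suc m \<le> n \<Longrightarrow> u (Suc m) n = 1 / p m n"
  proof -
    fix m n assume h: "Suc m \<le> n"
    have tr: "is_traj n (\<lambda>j. p j n) (\<lambda>j. u j n)" using traj h by simp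
    show "u (Suc m) n = 1 / p m n" using traj_step(2)[OF tr, of "Suc m"] h by simp
  qed
  have posn: "\<And>m n. Suc m \<le> n \<Longrightarrow> p m n > 0"
  proof -
    fix m n assume h: "Suc m \<le> n"
    have tr: "is_traj n (\<lambda>j. p j n) (\<lambda>j. u j n)" using traj h by simp
    show "p m n > 0" using tr h unfolding is_traj_def by simp
  qed
  have R: "\<And>m. P (Suc m) = (P m)^2 * (U m + 1) - 1"
  proof -
    fix m
    have A: "(\<lambda>n. (p m n)^2 * (u m n + 1) - 1) \<longlonglongrightarrow> (P m)^2 * (U m + 1) - 1"
      using plim ulim unfolding P_def U_def by (intro tendsto_intros) auto
    have B: "eventually (\<lambda>n. (p m n)^2 * (u m n + 1) - 1 = p (Suc m) n) sequentially"
      using ev[of m] by eventually_elim (simp add: stepR)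
    have C: "(\<lambda>n. p (Suc m) n) \<longlonglongrightarrow> (P m)^2 * (U m + 1) - 1"
      by (rule Lim_transform_eventually[OF A B])
    have D: "(\<lambda>n. p (Suc m) n) \<longlonglongrightarrow> P (Suc m)" using plim unfolding P_def by simp
    show "P (Suc m) = (P m)^2 * (U m + 1) - 1" by (rule LIMSEQ_unique[OF D C])
  qed
  have PU: "\<And>m. P m * U (Suc m) = 1"
  proof -
    fix m
    have A: "(\<lambda>n. p m n * u (Suc m) n) \<longlonglongrightarrow> P m * U (Suc m)"
      using plim ulim unfolding P_def U_def by (intro tendsto_intros) auto
    have B: "eventually (\<lambda>n. p m n * u (Suc m) n = 1) sequentially"
      using ev[of m] by eventually_elim (simp add: stepU posn less_imp_neq[symmetric])
    have C: "(\<lambda>n. 1::real) \<longlonglongrightarrow> P m * U (Suc m)"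
      by (rule Lim_transform_eventually[OF A B])
    show "P m * U (Suc m) = 1" using LIMSEQ_unique[OF tendsto_const C] by simp
  qed
  have nonneg: "\<And>m. P m \<ge> 0"
  proof -
    fix m
    have B: "eventually (\<lambda>n. 0 \<le> p m n) sequentially"
      using ev[of m] by eventually_elim (simp add: less_imp_le posn)
    have D: "(\<lambda>n. p m n) \<longlonglongrightarrow> P m" using plim unfolding P_def by simp
    show "P m \<ge> 0" by (rule tendsto_lowerbound[OF D B]) simp
  qed
  have pos: "\<And>m. P m > 0"
  proof -
    fix m
    have "P m \<noteq> 0" using PU[of m] by auto
    then show "P m > 0" using nonneg[of m] by simp
  qed
  have Ru: "\<And>m. U (Suc m) = 1 / P m"
  proof -
    fix m
    show "U (Suc m) = 1 / P m" using PU[of m] pos[of m] by (simp add: field_simps)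
  qed
  have U0: "U 0 = 0"
  proof -
    have B: "eventually (\<lambda>n. (0::real) = u 0 n) sequentially"
    proof -
      have "\<forall>n\<ge>1. u 0 n = 0" using traj unfolding is_traj_def by simp
      then show ?thesis unfolding eventually_sequentially by auto
    qed
    have C: "(\<lambda>n. u 0 n) \<longlonglongrightarrow> 0"
      by (rule Lim_transform_eventually[OF tendsto_const B])
    have D: "(\<lambda>n. u 0 n) \<longlonglongrightarrow> U 0" using ulim unfolding U_def by simp
    show ?thesis by (rule LIMSEQ_unique[OF D C])
  qed
  have F: "\<And>m. \<not> (P (Suc m) > 1 \<and> P (Suc m) > P m)"
  proof
    fix m assume h: "P (Suc m) > 1 \<and> P (Suc m) > P m"
    have "eventually (\<lambda>n. p (Suc m) n > 1) sequentially"
    proof -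
      have D: "(\<lambda>n. p (Suc m) n) \<longlonglongrightarrow> P (Suc m)" using plim unfolding P_def by simp
      show ?thesis using order_tendstoD(1)[OF D] h by simp
    qed
    moreover have "eventually (\<lambda>n. p (Suc m) n - p m n > 0) sequentially"
    proof -
      have "(\<lambda>n. p (Suc m) n - p m n) \<longlonglongrightarrow> P (Suc m) - P m"
        using plim unfolding P_def by (intro tendsto_intros) auto
      from order_tendstoD(1)[OF this, of 0] h show ?thesis by simp
    qed
    moreover note ev[of m]
    ultimately have "eventually (\<lambda>n. False) sequentially"
    proof eventually_elim
      case (elim n)
      have tr: "is_traj n (\<lambda>j. p j n) (\<lambda>j. u j n)" using traj elim by auto
      show False using traj_grow[OF tr, of "Suc m"] elim by simp
    qed
    then show False by simp
  qed
  have R': "\<And>m. P (Suc m) = (P m)^2 * (U m + 1) - 1" using R .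
  have G: "\<And>m. P (Suc m) < 1 \<Longrightarrow> P m < P (Suc m)"
  proof -
    fix m assume h: "P (Suc m) < 1"
    show "P m < P (Suc m)"
    proof (rule ccontr)
      assume "\<not> P m < P (Suc m)"
      then have "P (Suc m) \<le> P m" by simp
      then show False using G_lemma[of P U m, OF R Ru pos h] by simp
    qed
  qed
  have P1: "P 1 = (P 0)^2 - 1" using R[of 0] U0 by simp
  have P0: "P 0 > 1"
  proof -
    have "(P 0)^2 > 1" using P1 pos[of 1] by simp
    show ?thesis
    proof (rule ccontr)
      assume "\<not> P 0 > 1"
      then have "(P 0)^2 \<le> 1" using pos[of 0] by (simp add: power_le_one)
      then show False using \<open>(P 0)^2 > 1\<close> by simp
    qed
  qed
  have ge1: "\<And>m. P m \<ge> 1"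
  proof -
    have A: "\<And>j. P (Suc j) < 1 \<Longrightarrow> P 0 < 1"
    proof -
      fix j show "P (Suc j) < 1 \<Longrightarrow> P 0 < 1"
      proof (induction j)
        case 0 then show ?case using G[of 0] by simp
      next
        case (Suc j) then show ?case using G[of "Suc j"] by simp
      qed
    qed
    fix m show "P m \<ge> 1"
    proof (cases m)
      case 0 then show ?thesis using P0 by simp
    next
      case (Suc j)
      have "\<not> P (Suc j) < 1" using A[of j] P0 by linarith
      then show ?thesis using Suc by simp
    qed
  qed
  have dec: "decseq P"
  proof (rule decseq_SucI)
    fix m show "P (Suc m) \<le> P m" using F[of m] ge1[of m] ge1[of "Suc m"] by linarith
  qed
  obtain L where L: "P \<longlonglongrightarrow> L" "\<And>i. L \<le> P i"
  proof -
    have "\<forall>i. 1 \<le> P i" using ge1 by simp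
    from decseq_convergent[OF dec this] show ?thesis using that by blast
  qed
  have L1: "L \<ge> 1" by (rule tendsto_lowerbound[OF L(1)]) (simp_all add: ge1)
  have rec2: "\<And>m. P (Suc (Suc m)) = (P (Suc m))^2 * (1 / P m + 1) - 1"
    using R Ru by simp
  have LS: "(\<lambda>m. P (Suc m)) \<longlonglongrightarrow> L" by (rule LIMSEQ_Suc[OF L(1)])
  have Lne: "L \<noteq> 0" using L1 by simp
  have A: "(\<lambda>m. (P (Suc m))^2 * (1 / P m + 1) - 1) \<longlonglongrightarrow> L^2 * (1/L + 1) - 1"
    by (intro tendsto_intros LS L(1) Lne)
  have B: "(\<lambda>m. (P (Suc m))^2 * (1 / P m + 1) - 1) = (\<lambda>m. P (Suc (Suc m)))"
    using rec2 by simp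
  have C: "(\<lambda>m. P (Suc (Suc m))) \<longlonglongrightarrow> L" by (rule LIMSEQ_Suc[OF LS])
  have A2: "(\<lambda>m. P (Suc (Suc m))) \<longlonglongrightarrow> L^2 * (1/L + 1) - 1" using A unfolding B .
  have "L = L^2 * (1/L + 1) - 1" by (rule LIMSEQ_unique[OF C A2])
  moreover have "L^2 * (1/L + 1) = L + L^2" using Lne by (simp add: power2_eq_square distrib_left)
  ultimately have "L^2 = 1" by simp
  then have "(L - 1) * (L + 1) = 0" by (simp add: power2_eq_square algebra_simps)
  moreover have "L + 1 \<noteq> 0" using L1 by simp
  ultimately have Leq: "L = 1" by simp
  have Pl: "P \<longlonglongrightarrow> 1" using L(1) Leq by simp
  have "(\<lambda>m. U (Suc m)) \<longlonglongrightarrow> 1"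
    using tendsto_divide[OF tendsto_const Pl, of 1] by (simp add: Ru)
  then have Ul: "U \<longlonglongrightarrow> 1" by (rule LIMSEQ_imp_Suc)
  have "(\<lambda>j. 1 - U j) \<longlonglongrightarrow> 1 - 1" by (intro tendsto_intros Ul)
  then show ?thesis using Pl Ul unfolding P_def U_def by simp
qed

end
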